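(* Let $n\ge 2$. The number $\eta_n$ of all unordered pairs of disjoint $n^2\times n^2$ S-permutation matrices equals $$\eta_n=\frac{(n!)^{2n}}{2}\,\xi_n,\qquad\text{where}\qquad \xi_n=\sum_{\overline{A}\in\overline{\mathfrak{B}}_n,\ \varepsilon(\overline{A})\ge 2}(-1)^{\varepsilon(\overline{A})}\,|\overline{A}|\prod_{i=0}^{n-2}\left[(n-i)!\right]^{\psi_i(\overline{A})}.$$
   Context: An $n^2\times n^2$ S-permutation matrix is an $n^2\times n^2$ binary matrix which, when partitioned into $n^2$ non-intersecting consecutive $n\times n$ blocks, contains exactly one $1$ in each row, each column and each block. Two binary matrices $(a_{ij}),(b_{ij})$ of equal size are disjoint if there are no $i,j$ with $a_{ij}=b_{ij}=1$. $\mathfrak{B}_n$ is the set of $n\times n$ binary matrices. For $A\in\mathfrak{B}_n$, $r_k(A)$ (resp. $c_k(A)$) is the number of rows (resp. columns) of $A$ with exactly $k$ ones, $\psi_k(A)=r_k(A)+c_k(A)$, and $\varepsilon(A)$ is the total number of ones of $A$. $A\sim B$ iff $B$ is obtained from $A$ by permuting rows; $\overline{A}$ is the equivalence class of $A$, $|\overline{A}|$ its cardinality, $\overline{\mathfrak{B}}_n=\mathfrak{B}_n/\!\sim$; $\psi_k,\varepsilon$ are defined on classes via any representative. *)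

theory Defs
  imports Complex_Main "HOL-Combinatorics.Permutations"
begin

text \<open>A binary matrix of size m x m is represented by the set of positions
  (i,j), 0-based, with i,j < m, that carry a 1.\<close>

definition S_perm :: "nat \<Rightarrow> (nat \<times> nat) set \<Rightarrow> bool" where
  "S_perm n P \<longleftrightarrow> P \<subseteq> {..<n^2} \<times> {..<n^2}
     \<and> (\<forall>i<n^2. \<exists>!j. (i,j) \<in> P)
     \<and> (\<forall>j<n^2. \<exists>!i. (i,j) \<in> P)
     \<and> (\<forall>a<n. \<forall>b<n. \<exists>!p. p \<in> P \<and> fst p div n = a \<and> snd p div n = b)"

definition disjoint_mat :: "(nat \<times> nat) set \<Rightarrow> (nat \<times> nat) set \<Rightarrow> bool" where
  "disjoint_mat P Q \<longleftrightarrow> P \<inter> Q = {}"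

definition eta :: "nat \<Rightarrow> nat" where
  "eta n = card {{P, Q} | P Q. S_perm n P \<and> S_perm n Q \<and> disjoint_mat P Q}"

definition binmats :: "nat \<Rightarrow> (nat \<times> nat) set set" where
  "binmats n = Pow ({..<n} \<times> {..<n})"

definition row_equiv :: "nat \<Rightarrow> ((nat \<times> nat) set \<times> (nat \<times> nat) set) set" where
  "row_equiv n = {(A, B). A \<in> binmats n \<and>
      (\<exists>\<sigma>. \<sigma> permutes {..<n} \<and> B = (\<lambda>(i,j). (\<sigma> i, j)) ` A)}"

definition binclasses :: "nat \<Rightarrow> (nat \<times> nat) set set set" where
  "binclasses n = binmats n // row_equiv n"

definition r_k :: "nat \<Rightarrow> nat \<Rightarrow> (nat \<times> nat) set \<Rightarrow> nat" where
  "r_k n k A = card {i. i < n \<and> card {j. j < n \<and> (i,j) \<in> A} = k}"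

definition c_k :: "nat \<Rightarrow> nat \<Rightarrow> (nat \<times> nat) set \<Rightarrow> nat" where
  "c_k n k A = card {j. j < n \<and> card {i. i < n \<and> (i,j) \<in> A} = k}"

definition psi :: "nat \<Rightarrow> nat \<Rightarrow> (nat \<times> nat) set \<Rightarrow> nat" where
  "psi n k A = r_k n k A + c_k n k A"

definition eps :: "(nat \<times> nat) set \<Rightarrow> nat" where
  "eps A = card A"

definition rep :: "(nat \<times> nat) set set \<Rightarrow> (nat \<times> nat) set" where
  "rep C = (SOME A. A \<in> C)"

definition xi :: "nat \<Rightarrow> int" where
  "xi n = (\<Sum>C \<in> {C \<in> binclasses n. eps (rep C) \<ge> 2}.
      (-1) ^ eps (rep C) * int (card C) *
      (\<Prod>i = 0..n-2. (int (fact (n - i))) ^ psi n i (rep C)))"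

end

theory Submission imports Defs begin

lemma perm_extend_count:
  fixes S :: "nat set" and R :: "(nat \<times> nat) set"
  assumes fS: "finite S" and RS: "R \<subseteq> S \<times> S" and i1: "inj_on fst R" and i2: "inj_on snd R"
  shows "card {p. p permutes S \<and> (\<forall>(x,y)\<in>R. p x = y)} = fact (card S - card R)"
proof -
  define D where "D = fst ` R"
  define E where "E = snd ` R"
  have fR: "finite R" using fS RS finite_subset by (meson finite_SigmaI)
  have cD: "card D = card R" unfolding D_def using card_image[OF i1] .
  have cE: "card E = card R" unfolding E_def using card_image[OF i2] .
  have DS: "D \<subseteq> S" "E \<subseteq> S" using RS by (auto simp: D_def E_def)
  have "card (S - D) = card (S - E)"
    using DS cD cE fS by (simp add: card_Diff_subset finite_subset)
  then obtain g where g: "bij_betw g (S - D) (S - E)"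
    using fS finite_same_card_bij by blast
  define tau where "tau x = (if x \<in> D then (THE y. (x,y) \<in> R) else if x \<in> S then g x else x)" for x
  have tauR: "tau x = y" if "(x,y) \<in> R" for x y
  proof -
    have "x \<in> D" using that by (force simp: D_def)
    moreover have "(THE y. (x,y) \<in> R) = y"
      using that i1 by (intro the_equality) (auto simp: inj_on_def, fastforce)
    ultimately show ?thesis by (simp add: tau_def)
  qed
  have tauD: "tau x \<in> E \<and> (x, tau x) \<in> R" if "x \<in> D" for x
    using that tauR by (force simp: D_def E_def)
  have tauSD: "tau x = g x" if "x \<in> S - D" for x using that by (simp add: tau_def)
  have inj: "inj_on tau S"
  proof (rule inj_onI)
    fix x1 x2 assume x: "x1 \<in> S" "x2 \<in> S" "tau x1 = tau x2"
    show "x1 = x2"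
    proof (cases "x1 \<in> D"; cases "x2 \<in> D")
      assume "x1 \<in> D" "x2 \<in> D"
      then show ?thesis using tauD[of x1] tauD[of x2] x(3) i2
        by (metis inj_on_def prod.sel)
    next
      assume "x1 \<in> D" "x2 \<notin> D"
      then show ?thesis using tauD[of x1] tauSD[of x2] x g
        by (metis DiffD2 DiffI bij_betwE)
    next
      assume "x1 \<notin> D" "x2 \<in> D"
      then show ?thesis using tauD[of x2] tauSD[of x1] x g
        by (metis DiffD2 DiffI bij_betwE)
    next
      assume "x1 \<notin> D" "x2 \<notin> D"
      then show ?thesis using tauSD x g by (metis DiffI bij_betw_def inj_on_def)
    qed
  qed
  have img: "tau ` S \<subseteq> S"
  proof
    fix y assume "y \<in> tau ` S"
    then obtain x where x: "x \<in> S" "y = tau x" by auto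
    show "y \<in> S"
    proof (cases "x \<in> D")
      case True then show ?thesis using tauD[of x] x DS by auto
    next
      case False then show ?thesis using tauSD[of x] x g by (auto dest: bij_betwE)
    qed
  qed
  have tauP: "tau permutes S"
  proof (rule bij_imp_permutes)
    show "bij_betw tau S S" using endo_inj_surj[OF fS img inj] inj by (simp add: bij_betw_def)
    show "tau x = x" if "x \<notin> S" for x using that DS by (auto simp: tau_def)
  qed
  have eq: "{p. p permutes S \<and> (\<forall>(x,y)\<in>R. p x = y)} = (\<lambda>q. tau \<circ> q) ` {q. q permutes S - D}"
  proof (intro equalityI subsetI)
    fix p assume "p \<in> {p. p permutes S \<and> (\<forall>(x,y)\<in>R. p x = y)}"
    then have p: "p permutes S" "\<And>x y. (x,y) \<in> R \<Longrightarrow> p x = y" by auto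
    define q where "q = inv tau \<circ> p"
    have qS: "q permutes S" unfolding q_def using p(1) tauP permutes_compose permutes_inv by blast
    have qD: "q x = x" if xD: "x \<in> D" for x
    proof -
      obtain y where "(x,y) \<in> R" using xD by (force simp: D_def)
      then show ?thesis using p(2) tauR permutes_inverses(2)[OF tauP] by (metis comp_apply q_def)
    qed
    have "q permutes S - D"
      using qS qD unfolding permutes_def by blast
    moreover have "p = tau \<circ> q" unfolding q_def using permutes_inverses(1)[OF tauP] by (simp add: fun_eq_iff)
    ultimately show "p \<in> (\<lambda>q. tau \<circ> q) ` {q. q permutes S - D}" by auto
  next
    fix p assume "p \<in> (\<lambda>q. tau \<circ> q) ` {q. q permutes S - D}"
    then obtain q where q: "q permutes S - D" "p = tau \<circ> q" by auto
    have "q permutes S" using q(1) permutes_subset by blast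
    then have "p permutes S" using q(2) tauP permutes_compose by blast
    moreover have "p x = y" if "(x,y) \<in> R" for x y
    proof -
      have "x \<in> D" using that by (force simp: D_def)
      then have "q x = x" using q(1) permutes_not_in by fastforce
      then show ?thesis using q(2) tauR that by simp
    qed
    ultimately show "p \<in> {p. p permutes S \<and> (\<forall>(x,y)\<in>R. p x = y)}" by auto
  qed
  have "inj (\<lambda>q. tau \<circ> q)"
    using permutes_inj[OF tauP] by (auto simp: inj_def fun_eq_iff)
  then have "card ((\<lambda>q. tau \<circ> q) ` {q. q permutes S - D}) = card {q. q permutes S - D}"
    by (meson card_image inj_on_subset subset_UNIV)
  also have "\<dots> = fact (card (S - D))" using card_permutations fS by blast
  also have "card (S - D) = card S - card R" using cD DS fS by (simp add: card_Diff_subset finite_subset)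
  finally show ?thesis using eq by (simp add: comp_def)
qed

definition Fam :: "nat \<Rightarrow> (nat \<Rightarrow> nat \<Rightarrow> nat) set" where
  "Fam n = PiE {..<n} (\<lambda>_. {p. p permutes {..<n}})"

definition Phi :: "nat \<Rightarrow> (nat \<Rightarrow> nat \<Rightarrow> nat) \<Rightarrow> (nat \<Rightarrow> nat \<Rightarrow> nat) \<Rightarrow> (nat \<times> nat) set" where
  "Phi n F G = {(i,j). i < n^2 \<and> j < n^2 \<and> F (i div n) (i mod n) = j div n \<and> G (j div n) (j mod n) = i div n}"

definition rowf :: "(nat \<times> nat) set \<Rightarrow> nat \<Rightarrow> nat" where "rowf Q i = (THE j. (i,j) \<in> Q)"
definition colf :: "(nat \<times> nat) set \<Rightarrow> nat \<Rightarrow> nat" where "colf Q j = (THE i. (i,j) \<in> Q)"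

definition Fof :: "nat \<Rightarrow> (nat \<times> nat) set \<Rightarrow> nat \<Rightarrow> nat \<Rightarrow> nat" where
  "Fof n Q = (\<lambda>a\<in>{..<n}. \<lambda>r. if r < n then rowf Q (a*n+r) div n else r)"
definition Gof :: "nat \<Rightarrow> (nat \<times> nat) set \<Rightarrow> nat \<Rightarrow> nat \<Rightarrow> nat" where
  "Gof n Q = (\<lambda>b\<in>{..<n}. \<lambda>s. if s < n then colf Q (b*n+s) div n else s)"

lemma sq_div: "i < n^2 \<Longrightarrow> i div (n::nat) < n"
  by (simp add: less_mult_imp_div_less power2_eq_square)
lemma sq_mod: "i < n^2 \<Longrightarrow> i mod (n::nat) < n"
  by (metis bot_nat_0.extremum_strict mod_less_divisor not_gr_zero power_zero_numeral zero_less_power2)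
lemma comb_lt: "a < n \<Longrightarrow> r < (n::nat) \<Longrightarrow> a*n + r < n^2"
proof -
  assume "a < n" "r < n"
  then have "a*n + r < a*n + n" by simp
  also have "\<dots> = (a+1)*n" by simp
  also have "\<dots> \<le> n*n" using \<open>a<n\<close> by (intro mult_right_mono) auto
  finally show ?thesis by (simp add: power2_eq_square)
qed
lemma comb_div: "r < (n::nat) \<Longrightarrow> (a*n + r) div n = a" by simp
lemma comb_mod: "r < (n::nat) \<Longrightarrow> (a*n + r) mod n = r" by simp
lemma decomp: "(i::nat) = (i div n) * n + i mod n" by simp

lemma Fam_perm: "F \<in> Fam n \<Longrightarrow> a < n \<Longrightarrow> F a permutes {..<n}"
  by (auto simp: Fam_def PiE_def)

lemma perm_lt: "p permutes {..<n} \<Longrightarrow> x < n \<Longrightarrow> p x < (n::nat)"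
  using permutes_in_image by fastforce
lemma perm_inv_lt: "p permutes {..<n} \<Longrightarrow> x < n \<Longrightarrow> inv p x < (n::nat)"
  using permutes_inv perm_lt by blast
lemma perm_eq_inv: "p permutes S \<Longrightarrow> p x = y \<Longrightarrow> x = inv p y"
  using permutes_inverses(2) by metis

lemma Phi_Sperm:
  assumes F: "F \<in> Fam n" and G: "G \<in> Fam n"
  shows "S_perm n (Phi n F G)"
  unfolding S_perm_def
proof (intro conjI allI impI)
  show "Phi n F G \<subseteq> {..<n^2} \<times> {..<n^2}" by (auto simp: Phi_def)
next
  fix i assume i: "i < n^2"
  define a where "a = i div n"
  define b where "b = F a (i mod n)"
  define s where "s = inv (G b) a"
  have a: "a < n" using i sq_div a_def by blast
  have b: "b < n" using Fam_perm[OF F a] sq_mod[OF i] perm_lt b_def by blast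
  have s: "s < n" using Fam_perm[OF G b] a perm_inv_lt s_def by blast
  have Gs: "G b s = a" using permutes_inverses(1)[OF Fam_perm[OF G b]] s_def by simp
  show "\<exists>!j. (i, j) \<in> Phi n F G"
  proof (rule ex1I[of _ "b*n+s"])
    show "(i, b*n+s) \<in> Phi n F G" using i comb_lt[OF b s] s Gs
      by (simp add: Phi_def a_def[symmetric] b_def[symmetric])
  next
    fix j assume "(i,j) \<in> Phi n F G"
    then have j: "j div n = b" "G b (j mod n) = a" by (auto simp: Phi_def a_def b_def)
    then have "j mod n = s" using perm_eq_inv[OF Fam_perm[OF G b]] s_def by blast
    then show "j = b*n+s" using j decomp[of j n] by simp
  qed
next
  fix j assume j: "j < n^2"
  define b where "b = j div n"
  define a where "a = G b (j mod n)"
  define r where "r = inv (F a) b"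
  have b: "b < n" using j sq_div b_def by blast
  have a: "a < n" using Fam_perm[OF G b] sq_mod[OF j] perm_lt a_def by blast
  have r: "r < n" using Fam_perm[OF F a] b perm_inv_lt r_def by blast
  have Fr: "F a r = b" using permutes_inverses(1)[OF Fam_perm[OF F a]] r_def by simp
  show "\<exists>!i. (i, j) \<in> Phi n F G"
  proof (rule ex1I[of _ "a*n+r"])
    show "(a*n+r, j) \<in> Phi n F G" using j comb_lt[OF a r] r Fr
      by (simp add: Phi_def a_def[symmetric] b_def[symmetric])
  next
    fix i assume "(i,j) \<in> Phi n F G"
    then have i: "i div n = a" "F a (i mod n) = b" by (auto simp: Phi_def a_def b_def)
    then have "i mod n = r" using perm_eq_inv[OF Fam_perm[OF F a]] r_def by blast
    then show "i = a*n+r" using i decomp[of i n] by simp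
  qed
next
  fix a b assume a: "a < n" and b: "b < n"
  define r where "r = inv (F a) b"
  define s where "s = inv (G b) a"
  have r: "r < n" using Fam_perm[OF F a] b perm_inv_lt r_def by blast
  have s: "s < n" using Fam_perm[OF G b] a perm_inv_lt s_def by blast
  have Fr: "F a r = b" using permutes_inverses(1)[OF Fam_perm[OF F a]] r_def by simp
  have Gs: "G b s = a" using permutes_inverses(1)[OF Fam_perm[OF G b]] s_def by simp
  show "\<exists>!p. p \<in> Phi n F G \<and> fst p div n = a \<and> snd p div n = b"
  proof (rule ex1I[of _ "(a*n+r, b*n+s)"])
    show "(a*n+r, b*n+s) \<in> Phi n F G \<and> fst (a*n+r, b*n+s) div n = a \<and> snd (a*n+r, b*n+s) div n = b"
      using comb_lt[OF a r] comb_lt[OF b s] r s Fr Gs by (simp add: Phi_def)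
  next
    fix p assume p: "p \<in> Phi n F G \<and> fst p div n = a \<and> snd p div n = b"
    obtain i j where ij: "p = (i,j)" by force
    have h: "i div n = a" "j div n = b" "F a (i mod n) = b" "G b (j mod n) = a"
      using p by (auto simp: Phi_def ij)
    have "i mod n = r" using h perm_eq_inv[OF Fam_perm[OF F a]] r_def by blast
    moreover have "j mod n = s" using h perm_eq_inv[OF Fam_perm[OF G b]] s_def by blast
    ultimately show "p = (a*n+r, b*n+s)" using h decomp[of i n] decomp[of j n] ij by simp
  qed
qed

lemma SpD:
  assumes "S_perm n Q"
  shows "Q \<subseteq> {..<n^2} \<times> {..<n^2}" "\<forall>i<n^2. \<exists>!j. (i,j) \<in> Q" "\<forall>j<n^2. \<exists>!i. (i,j) \<in> Q"
    "\<forall>a<n. \<forall>b<n. \<exists>!p. p \<in> Q \<and> fst p div n = a \<and> snd p div n = b"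
  using assms unfolding S_perm_def by simp_all
lemma Sperm_sub: "S_perm n Q \<Longrightarrow> (i,j) \<in> Q \<Longrightarrow> i < n^2 \<and> j < n^2"
proof -
  assume a: "S_perm n Q" "(i,j) \<in> Q"
  have "Q \<subseteq> {..<n^2} \<times> {..<n^2}" using SpD[OF a(1)] by blast
  then show ?thesis using a(2) by auto
qed
lemma rowf_in: "S_perm n Q \<Longrightarrow> i < n^2 \<Longrightarrow> (i, rowf Q i) \<in> Q"
  unfolding rowf_def by (rule theI') (use SpD(2) in blast)
lemma rowf_eq: "S_perm n Q \<Longrightarrow> (i,j) \<in> Q \<Longrightarrow> rowf Q i = j"
proof -
  assume a: "S_perm n Q" "(i,j) \<in> Q"
  then have "i < n^2" using Sperm_sub by blast
  then have "\<exists>!j. (i,j) \<in> Q" using SpD(2)[OF a(1)] by blast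
  then show ?thesis unfolding rowf_def using a(2) by (rule the1_equality)
qed
lemma colf_in: "S_perm n Q \<Longrightarrow> j < n^2 \<Longrightarrow> (colf Q j, j) \<in> Q"
  unfolding colf_def by (rule theI'[where P="\<lambda>i. (i,j) \<in> Q"]) (use SpD(3) in blast)
lemma colf_eq: "S_perm n Q \<Longrightarrow> (i,j) \<in> Q \<Longrightarrow> colf Q j = i"
proof -
  assume a: "S_perm n Q" "(i,j) \<in> Q"
  then have "j < n^2" using Sperm_sub by blast
  then have "\<exists>!i. (i,j) \<in> Q" using SpD(3)[OF a(1)] by blast
  then show ?thesis unfolding colf_def using a(2) by (rule the1_equality)
qed
lemma ex1_uniq: "\<exists>!x. P x \<Longrightarrow> P a \<Longrightarrow> P b \<Longrightarrow> a = b" by blast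

lemma block_uniq: "S_perm n Q \<Longrightarrow> p \<in> Q \<Longrightarrow> q \<in> Q \<Longrightarrow> fst p div n = fst q div n \<Longrightarrow>
    snd p div n = snd q div n \<Longrightarrow> p = q"
proof -
  assume Q: "S_perm n Q" and pq: "p \<in> Q" "q \<in> Q" "fst p div n = fst q div n" "snd p div n = snd q div n"
  obtain i j where p: "p = (i,j)" by force
  have "i < n^2" "j < n^2" using Sperm_sub[OF Q] pq p by auto
  then have lt: "i div n < n" "j div n < n" using sq_div by auto
  have E: "\<exists>!p. p \<in> Q \<and> fst p div n = i div n \<and> snd p div n = j div n"
    using SpD(4)[OF Q, rule_format, OF lt] .
  show "p = q"
    by (rule ex1_uniq[OF E]) (use pq p in auto)
qed

lemma Fof_Phi:
  assumes F: "F \<in> Fam n" and G: "G \<in> Fam n"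
  shows "Fof n (Phi n F G) = F" "Gof n (Phi n F G) = G"
proof -
  have Q: "S_perm n (Phi n F G)" using Phi_Sperm[OF F G] .
  show "Fof n (Phi n F G) = F"
  proof (rule ext)
    fix a show "Fof n (Phi n F G) a = F a"
    proof (cases "a < n")
      case a: True
      show ?thesis
      proof (rule ext)
        fix r show "Fof n (Phi n F G) a r = F a r"
        proof (cases "r < n")
          case r: True
          have "(a*n+r, rowf (Phi n F G) (a*n+r)) \<in> Phi n F G"
            using rowf_in[OF Q comb_lt[OF a r]] .
          then have "rowf (Phi n F G) (a*n+r) div n = F a r" using r by (simp add: Phi_def)
          then show ?thesis using a r by (simp add: Fof_def)
        next
          case False
          then show ?thesis using a permutes_not_in[OF Fam_perm[OF F a]] by (simp add: Fof_def)
        qed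
      qed
    next
      case False
      then show ?thesis using PiE_arb[OF F[unfolded Fam_def]] by (simp add: Fof_def)
    qed
  qed
  show "Gof n (Phi n F G) = G"
  proof (rule ext)
    fix b show "Gof n (Phi n F G) b = G b"
    proof (cases "b < n")
      case b: True
      show ?thesis
      proof (rule ext)
        fix s show "Gof n (Phi n F G) b s = G b s"
        proof (cases "s < n")
          case s: True
          have "(colf (Phi n F G) (b*n+s), b*n+s) \<in> Phi n F G"
            using colf_in[OF Q comb_lt[OF b s]] .
          then have "colf (Phi n F G) (b*n+s) div n = G b s" using s by (simp add: Phi_def)
          then show ?thesis using b s by (simp add: Gof_def)
        next
          case False
          then show ?thesis using b permutes_not_in[OF Fam_perm[OF G b]] by (simp add: Gof_def)
        qed
      qed
    next
      case False
      then show ?thesis using PiE_arb[OF G[unfolded Fam_def]] by (simp add: Gof_def)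
    qed
  qed
qed


lemma Fof_perm:
  assumes Q: "S_perm n Q" and a: "a < n"
  shows "(\<lambda>r. if r < n then rowf Q (a*n+r) div n else r) permutes {..<n}"
    (is "?f permutes _")
proof (rule bij_imp_permutes)
  have img: "?f ` {..<n} \<subseteq> {..<n}"
  proof
    fix y assume "y \<in> ?f ` {..<n}"
    then obtain r where r: "r < n" "y = ?f r" by auto
    have "(a*n+r, rowf Q (a*n+r)) \<in> Q" using rowf_in[OF Q comb_lt[OF a r(1)]] .
    then have "rowf Q (a*n+r) < n^2" using Sperm_sub[OF Q] by blast
    then show "y \<in> {..<n}" using r sq_div by auto
  qed
  have inj: "inj_on ?f {..<n}"
  proof (rule inj_onI)
    fix r1 r2 assume r: "r1 \<in> {..<n}" "r2 \<in> {..<n}" "?f r1 = ?f r2"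
    have r1: "r1 < n" and r2: "r2 < n" using r by auto
    have m1: "(a*n+r1, rowf Q (a*n+r1)) \<in> Q" using rowf_in[OF Q comb_lt[OF a r1]] .
    have m2: "(a*n+r2, rowf Q (a*n+r2)) \<in> Q" using rowf_in[OF Q comb_lt[OF a r2]] .
    have "(a*n+r1, rowf Q (a*n+r1)) = (a*n+r2, rowf Q (a*n+r2))"
      by (rule block_uniq[OF Q m1 m2]) (use r r1 r2 in auto)
    then show "r1 = r2" by simp
  qed
  show "bij_betw ?f {..<n} {..<n}" using endo_inj_surj[OF _ img inj] inj by (simp add: bij_betw_def)
  show "?f x = x" if "x \<notin> {..<n}" for x using that by simp
qed

lemma Gof_perm:
  assumes Q: "S_perm n Q" and b: "b < n"
  shows "(\<lambda>s. if s < n then colf Q (b*n+s) div n else s) permutes {..<n}"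
    (is "?f permutes _")
proof (rule bij_imp_permutes)
  have img: "?f ` {..<n} \<subseteq> {..<n}"
  proof
    fix y assume "y \<in> ?f ` {..<n}"
    then obtain r where r: "r < n" "y = ?f r" by auto
    have "(colf Q (b*n+r), b*n+r) \<in> Q" using colf_in[OF Q comb_lt[OF b r(1)]] .
    then have "colf Q (b*n+r) < n^2" using Sperm_sub[OF Q] by blast
    then show "y \<in> {..<n}" using r sq_div by auto
  qed
  have inj: "inj_on ?f {..<n}"
  proof (rule inj_onI)
    fix r1 r2 assume r: "r1 \<in> {..<n}" "r2 \<in> {..<n}" "?f r1 = ?f r2"
    have r1: "r1 < n" and r2: "r2 < n" using r by auto
    have m1: "(colf Q (b*n+r1), b*n+r1) \<in> Q" using colf_in[OF Q comb_lt[OF b r1]] .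
    have m2: "(colf Q (b*n+r2), b*n+r2) \<in> Q" using colf_in[OF Q comb_lt[OF b r2]] .
    have "(colf Q (b*n+r1), b*n+r1) = (colf Q (b*n+r2), b*n+r2)"
      by (rule block_uniq[OF Q m1 m2]) (use r r1 r2 in auto)
    then show "r1 = r2" by simp
  qed
  show "bij_betw ?f {..<n} {..<n}" using endo_inj_surj[OF _ img inj] inj by (simp add: bij_betw_def)
  show "?f x = x" if "x \<notin> {..<n}" for x using that by simp
qed

lemma Phi_Fof:
  assumes Q: "S_perm n Q"
  shows "Fof n Q \<in> Fam n" "Gof n Q \<in> Fam n" "Phi n (Fof n Q) (Gof n Q) = Q"
proof -
  show "Fof n Q \<in> Fam n" using Fof_perm[OF Q] by (auto simp: Fam_def Fof_def)
  show "Gof n Q \<in> Fam n" using Gof_perm[OF Q] by (auto simp: Fam_def Gof_def)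
  have F: "Fof n Q (i div n) (i mod n) = rowf Q i div n" if "i < n^2" for i
  proof -
    have "i div n < n" "i mod n < n" using that sq_div sq_mod by auto
    then show ?thesis using decomp[of i n] by (simp add: Fof_def)
  qed
  have G: "Gof n Q (j div n) (j mod n) = colf Q j div n" if "j < n^2" for j
  proof -
    have "j div n < n" "j mod n < n" using that sq_div sq_mod by auto
    then show ?thesis using decomp[of j n] by (simp add: Gof_def)
  qed
  show "Phi n (Fof n Q) (Gof n Q) = Q"
  proof (intro equalityI subsetI)
    fix x assume x: "x \<in> Phi n (Fof n Q) (Gof n Q)"
    obtain i j where ij: "x = (i,j)" by force
    have h: "i < n^2" "j < n^2" "rowf Q i div n = j div n" "colf Q j div n = i div n"
      using x F G by (auto simp: Phi_def ij)
    have m1: "(i, rowf Q i) \<in> Q" using rowf_in[OF Q h(1)] .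
    have m2: "(colf Q j, j) \<in> Q" using colf_in[OF Q h(2)] .
    have "(i, rowf Q i) = (colf Q j, j)"
      by (rule block_uniq[OF Q m1 m2]) (use h in auto)
    then show "x \<in> Q" using m1 m2 ij by simp
  next
    fix x assume x: "x \<in> Q"
    obtain i j where ij: "x = (i,j)" by force
    have m: "(i,j) \<in> Q" using x ij by simp
    have h: "i < n^2" "j < n^2" using Sperm_sub[OF Q m] by auto
    show "x \<in> Phi n (Fof n Q) (Gof n Q)"
      using h F G rowf_eq[OF Q m] colf_eq[OF Q m] by (simp add: Phi_def ij)
  qed
qed

lemma Phi_bij: "bij_betw (\<lambda>x. Phi n (fst x) (snd x)) (Fam n \<times> Fam n) {Q. S_perm n Q}"
proof (rule bij_betw_byWitness[where f'="\<lambda>Q. (Fof n Q, Gof n Q)"])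
  show "\<forall>a\<in>Fam n \<times> Fam n. (Fof n (Phi n (fst a) (snd a)), Gof n (Phi n (fst a) (snd a))) = a"
    using Fof_Phi by auto
  show "\<forall>a'\<in>{Q. S_perm n Q}. Phi n (fst (Fof n a', Gof n a')) (snd (Fof n a', Gof n a')) = a'"
    using Phi_Fof by auto
  show "(\<lambda>x. Phi n (fst x) (snd x)) ` (Fam n \<times> Fam n) \<subseteq> {Q. S_perm n Q}"
    using Phi_Sperm by auto
  show "(\<lambda>Q. (Fof n Q, Gof n Q)) ` {Q. S_perm n Q} \<subseteq> Fam n \<times> Fam n"
    using Phi_Fof by auto
qed


definition blk :: "nat \<Rightarrow> nat \<times> nat \<Rightarrow> nat \<times> nat" where
  "blk n t = (fst t div n, snd t div n)"

definition W :: "nat \<Rightarrow> (nat \<times> nat) set \<Rightarrow> nat" where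
  "W n A = (\<Prod>a<n. fact (n - card {b. b < n \<and> (a,b) \<in> A})) * (\<Prod>b<n. fact (n - card {a. a < n \<and> (a,b) \<in> A}))"

lemma row_uniq: "S_perm n P \<Longrightarrow> t \<in> P \<Longrightarrow> t' \<in> P \<Longrightarrow> fst t = fst t' \<Longrightarrow> t = t'"
  by (metis prod.collapse rowf_eq)
lemma col_uniq: "S_perm n P \<Longrightarrow> t \<in> P \<Longrightarrow> t' \<in> P \<Longrightarrow> snd t = snd t' \<Longrightarrow> t = t'"
  by (metis prod.collapse colf_eq)

lemma cnt_Fam:
  assumes P: "S_perm n P" and T: "T \<subseteq> P"
  shows "card {Q. S_perm n Q \<and> T \<subseteq> Q} = card {x \<in> Fam n \<times> Fam n. T \<subseteq> Phi n (fst x) (snd x)}"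
proof -
  let ?f = "\<lambda>x. Phi n (fst x) (snd x)"
  have b: "bij_betw ?f (Fam n \<times> Fam n) {Q. S_perm n Q}" by (rule Phi_bij)
  have "{Q. S_perm n Q \<and> T \<subseteq> Q} = ?f ` {x \<in> Fam n \<times> Fam n. T \<subseteq> ?f x}"
  proof (intro equalityI subsetI)
    fix Q assume "Q \<in> {Q. S_perm n Q \<and> T \<subseteq> Q}"
    then show "Q \<in> ?f ` {x \<in> Fam n \<times> Fam n. T \<subseteq> ?f x}"
      using Phi_Fof[of n Q] by (intro image_eqI[where x="(Fof n Q, Gof n Q)"]) auto
  qed (use Phi_Sperm in auto)
  moreover have "inj_on ?f {x \<in> Fam n \<times> Fam n. T \<subseteq> ?f x}"
    using b unfolding bij_betw_def by (rule inj_on_subset[OF conjunct1]) auto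
  ultimately show ?thesis by (simp add: card_image)
qed

lemma constr_app: "p \<in> {p. p permutes S \<and> (\<forall>(x,y)\<in>R. p x = y)} \<Longrightarrow> (x,y)\<in>R \<Longrightarrow> p x = y"
  by auto

lemma cnt_split:
  assumes P: "S_perm n P" and T: "T \<subseteq> P"
  shows "{x \<in> Fam n \<times> Fam n. T \<subseteq> Phi n (fst x) (snd x)} =
     (PiE {..<n} (\<lambda>a. {p. p permutes {..<n} \<and> (\<forall>(x,y)\<in>(\<lambda>(i,j). (i mod n, j div n)) ` {t\<in>T. fst t div n = a}. p x = y)}))
   \<times> (PiE {..<n} (\<lambda>b. {p. p permutes {..<n} \<and> (\<forall>(x,y)\<in>(\<lambda>(i,j). (j mod n, i div n)) ` {t\<in>T. snd t div n = b}. p x = y)}))"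
  (is "?lhs = ?rhs")
proof -
  have Tb: "i < n^2 \<and> j < n^2" if "(i,j) \<in> T" for i j using Sperm_sub[OF P] T that by blast
  have key: "T \<subseteq> Phi n F G \<longleftrightarrow> (\<forall>(i,j)\<in>T. F (i div n) (i mod n) = j div n \<and> G (j div n) (j mod n) = i div n)" for F G
    using Tb by (auto simp: Phi_def)
  show ?thesis
  proof (intro equalityI subsetI)
    fix x assume x: "x \<in> {x \<in> Fam n \<times> Fam n. T \<subseteq> Phi n (fst x) (snd x)}"
    obtain F G where xFG: "x = (F,G)" by force
    have F: "F \<in> Fam n" and G: "G \<in> Fam n" and k: "\<forall>(i,j)\<in>T. F (i div n) (i mod n) = j div n \<and> G (j div n) (j mod n) = i div n"
      using x key by (auto simp: xFG)
    show "x \<in> ?rhs" (is "_ \<in> ?A \<times> ?B")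
    proof -
      have "F \<in> ?A" using F k unfolding Fam_def by (auto simp: PiE_def)
      moreover have "G \<in> ?B" using G k unfolding Fam_def by (auto simp: PiE_def)
      ultimately show ?thesis by (simp add: xFG)
    qed
  next
    fix x assume x: "x \<in> ?rhs"
    obtain F G where xFG: "x = (F,G)" by force
    have F: "F \<in> Fam n" and G: "G \<in> Fam n" using x by (auto simp: xFG Fam_def PiE_def)
    have "\<forall>(i,j)\<in>T. F (i div n) (i mod n) = j div n \<and> G (j div n) (j mod n) = i div n"
    proof (clarify)
      fix i j assume ij: "(i,j) \<in> T"
      have lt: "i div n < n" "j div n < n" using Tb[OF ij] sq_div by auto
      have "F (i div n) \<in> {p. p permutes {..<n} \<and> (\<forall>(x,y)\<in>(\<lambda>(i,j). (i mod n, j div n)) ` {t\<in>T. fst t div n = i div n}. p x = y)}"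
        using x lt by (auto simp: xFG PiE_def Pi_def)
      moreover have "(i mod n, j div n) \<in> (\<lambda>(i,j). (i mod n, j div n)) ` {t\<in>T. fst t div n = i div n}"
        using ij by force
      ultimately have 1: "F (i div n) (i mod n) = j div n" by (rule constr_app)
      have "G (j div n) \<in> {p. p permutes {..<n} \<and> (\<forall>(x,y)\<in>(\<lambda>(i,j). (j mod n, i div n)) ` {t\<in>T. snd t div n = j div n}. p x = y)}"
        using x lt by (auto simp: xFG PiE_def Pi_def)
      moreover have "(j mod n, i div n) \<in> (\<lambda>(i,j). (j mod n, i div n)) ` {t\<in>T. snd t div n = j div n}"
        using ij by force
      ultimately have 2: "G (j div n) (j mod n) = i div n" by (rule constr_app)
      show "F (i div n) (i mod n) = j div n \<and> G (j div n) (j mod n) = i div n" using 1 2 by simp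
    qed
    then show "x \<in> {x \<in> Fam n \<times> Fam n. T \<subseteq> Phi n (fst x) (snd x)}"
      using F G key by (simp add: xFG)
  qed
qed


lemma cnt:
  assumes P: "S_perm n P" and T: "T \<subseteq> P"
  shows "card {Q. S_perm n Q \<and> T \<subseteq> Q} = W n (blk n ` T)"
proof -
  have Tb: "i < n^2 \<and> j < n^2" if "(i,j) \<in> T" for i j using Sperm_sub[OF P] T that by blast
  define R1 where "R1 a = (\<lambda>(i,j). (i mod n, j div n)) ` {t\<in>T. fst t div n = a}" for a
  define R2 where "R2 b = (\<lambda>(i,j). (j mod n, i div n)) ` {t\<in>T. snd t div n = b}" for b
  have c1: "card {p. p permutes {..<n} \<and> (\<forall>(x,y)\<in>R1 a. p x = y)} = fact (n - card {b. b < n \<and> (a,b) \<in> blk n ` T})" for a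
  proof -
    have sub: "R1 a \<subseteq> {..<n} \<times> {..<n}" using Tb sq_div sq_mod by (force simp: R1_def)
    have i1: "inj_on fst (R1 a)"
    proof (rule inj_onI)
      fix u v assume uv: "u \<in> R1 a" "v \<in> R1 a" "fst u = fst v"
      obtain i j where ij: "(i,j) \<in> T" "i div n = a" "u = (i mod n, j div n)" using uv(1) by (auto simp: R1_def)
      obtain i' j' where ij': "(i',j') \<in> T" "i' div n = a" "v = (i' mod n, j' div n)" using uv(2) by (auto simp: R1_def)
      have "i = i'" using ij ij' uv(3) decomp[of i n] decomp[of i' n] by simp
      then have "(i,j) = (i',j')" using row_uniq[OF P] ij ij' T by (metis fst_conv subsetD)
      then show "u = v" using ij ij' by simp
    qed
    have i2: "inj_on snd (R1 a)"
    proof (rule inj_onI)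
      fix u v assume uv: "u \<in> R1 a" "v \<in> R1 a" "snd u = snd v"
      obtain i j where ij: "(i,j) \<in> T" "i div n = a" "u = (i mod n, j div n)" using uv(1) by (auto simp: R1_def)
      obtain i' j' where ij': "(i',j') \<in> T" "i' div n = a" "v = (i' mod n, j' div n)" using uv(2) by (auto simp: R1_def)
      have "(i,j) = (i',j')" by (rule block_uniq[OF P]) (use ij ij' uv(3) T in auto)
      then show "u = v" using ij ij' by simp
    qed
    have "snd ` R1 a = {b. b < n \<and> (a,b) \<in> blk n ` T}"
      using Tb sq_div by (force simp: R1_def blk_def)
    then have "card (R1 a) = card {b. b < n \<and> (a,b) \<in> blk n ` T}"
      using card_image[OF i2] by simp
    then show ?thesis using perm_extend_count[OF _ sub i1 i2] by simp
  qed
  have c2: "card {p. p permutes {..<n} \<and> (\<forall>(x,y)\<in>R2 b. p x = y)} = fact (n - card {a. a < n \<and> (a,b) \<in> blk n ` T})" for b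
  proof -
    have sub: "R2 b \<subseteq> {..<n} \<times> {..<n}" using Tb sq_div sq_mod by (force simp: R2_def)
    have i1: "inj_on fst (R2 b)"
    proof (rule inj_onI)
      fix u v assume uv: "u \<in> R2 b" "v \<in> R2 b" "fst u = fst v"
      obtain i j where ij: "(i,j) \<in> T" "j div n = b" "u = (j mod n, i div n)" using uv(1) by (auto simp: R2_def)
      obtain i' j' where ij': "(i',j') \<in> T" "j' div n = b" "v = (j' mod n, i' div n)" using uv(2) by (auto simp: R2_def)
      have "j = j'" using ij ij' uv(3) decomp[of j n] decomp[of j' n] by simp
      then have "(i,j) = (i',j')" using col_uniq[OF P] ij ij' T by (metis snd_conv subsetD)
      then show "u = v" using ij ij' by simp
    qed
    have i2: "inj_on snd (R2 b)"
    proof (rule inj_onI)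
      fix u v assume uv: "u \<in> R2 b" "v \<in> R2 b" "snd u = snd v"
      obtain i j where ij: "(i,j) \<in> T" "j div n = b" "u = (j mod n, i div n)" using uv(1) by (auto simp: R2_def)
      obtain i' j' where ij': "(i',j') \<in> T" "j' div n = b" "v = (j' mod n, i' div n)" using uv(2) by (auto simp: R2_def)
      have "(i,j) = (i',j')" by (rule block_uniq[OF P]) (use ij ij' uv(3) T in auto)
      then show "u = v" using ij ij' by simp
    qed
    have "snd ` R2 b = {a. a < n \<and> (a,b) \<in> blk n ` T}"
      using Tb sq_div by (force simp: R2_def blk_def)
    then have "card (R2 b) = card {a. a < n \<and> (a,b) \<in> blk n ` T}"
      using card_image[OF i2] by simp
    then show ?thesis using perm_extend_count[OF _ sub i1 i2] by simp
  qed
  have "card {Q. S_perm n Q \<and> T \<subseteq> Q} = card {x \<in> Fam n \<times> Fam n. T \<subseteq> Phi n (fst x) (snd x)}"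
    by (rule cnt_Fam[OF P T])
  also have "\<dots> = card ((PiE {..<n} (\<lambda>a. {p. p permutes {..<n} \<and> (\<forall>(x,y)\<in>R1 a. p x = y)}))
     \<times> (PiE {..<n} (\<lambda>b. {p. p permutes {..<n} \<and> (\<forall>(x,y)\<in>R2 b. p x = y)})))"
    unfolding R1_def R2_def using cnt_split[OF P T] by simp
  also have "\<dots> = (\<Prod>a<n. card {p. p permutes {..<n} \<and> (\<forall>(x,y)\<in>R1 a. p x = y)}) *
      (\<Prod>b<n. card {p. p permutes {..<n} \<and> (\<forall>(x,y)\<in>R2 b. p x = y)})"
    by (simp add: card_cartesian_product card_PiE)
  also have "\<dots> = W n (blk n ` T)" unfolding W_def using c1 c2 by simp
  finally show ?thesis .
qed


lemma alt_sum: "finite X \<Longrightarrow> (\<Sum>T\<in>Pow X. (-1::int)^card T) = (if X = {} then 1 else 0)"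
proof -
  assume f: "finite X"
  have "(\<Prod>x\<in>X. (1::int) - 1) = (\<Sum>T\<in>Pow X. (-1)^card T * (\<Prod>x\<in>T. 1) * (\<Prod>x\<in>X-T. 1))"
    by (rule prod_diff_conv_sum[OF f])
  then have eq: "(\<Sum>T\<in>Pow X. (-1::int)^card T) = 0 ^ card X" by simp
  show ?thesis
  proof (cases "X = {}")
    case True then show ?thesis by simp
  next
    case False then have "card X > 0" using f by (simp add: card_gt_0_iff)
    then show ?thesis using eq False by simp
  qed
qed

lemma finite_Sperm: "finite {Q. S_perm n Q}"
proof -
  have "{Q. S_perm n Q} \<subseteq> Pow ({..<n^2} \<times> {..<n^2})" using SpD(1) by blast
  then show ?thesis by (rule finite_subset) simp
qed

lemma finite_Sperm_elem: "S_perm n P \<Longrightarrow> finite P"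
  by (rule finite_subset[of _ "{..<n^2} \<times> {..<n^2}"]) (use SpD(1) in auto)

lemma incl_excl:
  assumes P: "S_perm n P"
  shows "int (card {Q. S_perm n Q \<and> P \<inter> Q = {}}) =
    (\<Sum>T\<in>Pow P. (-1)^card T * int (card {Q. S_perm n Q \<and> T \<subseteq> Q}))"
proof -
  let ?S = "{Q. S_perm n Q}"
  have fS: "finite ?S" by (rule finite_Sperm)
  have fP: "finite P" using finite_Sperm_elem[OF P] .
  have cs: "int (card {Q \<in> ?S. R Q}) = (\<Sum>Q\<in>?S. if R Q then 1 else 0)" for R
    using sum.inter_filter[OF fS, of "\<lambda>_. (1::int)" R] by simp
  have "(\<Sum>T\<in>Pow P. (-1)^card T * int (card {Q. S_perm n Q \<and> T \<subseteq> Q}))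
      = (\<Sum>T\<in>Pow P. (-1)^card T * (\<Sum>Q\<in>?S. if T \<subseteq> Q then 1 else 0))"
    using cs[of "\<lambda>Q. _ \<subseteq> Q"] by simp
  also have "\<dots> = (\<Sum>T\<in>Pow P. \<Sum>Q\<in>?S. if T \<subseteq> Q then (-1)^card T else 0)"
    by (simp add: sum_distrib_left if_distrib cong: if_cong)
  also have "\<dots> = (\<Sum>Q\<in>?S. \<Sum>T\<in>Pow P. if T \<subseteq> Q then (-1)^card T else 0)"
    by (rule sum.swap)
  also have "\<dots> = (\<Sum>Q\<in>?S. \<Sum>T\<in>Pow (P \<inter> Q). (-1)^card T)"
  proof (rule sum.cong[OF refl])
    fix Q
    have "(\<Sum>T\<in>Pow P. if T \<subseteq> Q then (-1::int)^card T else 0) = (\<Sum>T\<in>{T \<in> Pow P. T \<subseteq> Q}. (-1)^card T)"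
      using sum.inter_filter[of "Pow P" "\<lambda>T. (-1::int)^card T" "\<lambda>T. T \<subseteq> Q"] fP by simp
    also have "{T \<in> Pow P. T \<subseteq> Q} = Pow (P \<inter> Q)" by auto
    finally show "(\<Sum>T\<in>Pow P. if T \<subseteq> Q then (-1::int)^card T else 0) = (\<Sum>T\<in>Pow (P \<inter> Q). (-1)^card T)" .
  qed
  also have "\<dots> = (\<Sum>Q\<in>?S. if P \<inter> Q = {} then 1 else 0)"
  proof (rule sum.cong[OF refl])
    fix Q show "(\<Sum>T\<in>Pow (P \<inter> Q). (-1::int)^card T) = (if P \<inter> Q = {} then 1 else 0)"
      by (rule alt_sum) (use fP in simp)
  qed
  also have "\<dots> = int (card {Q. S_perm n Q \<and> P \<inter> Q = {}})"
    using cs[of "\<lambda>Q. P \<inter> Q = {}"] by simp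
  finally show ?thesis by simp
qed


lemma blk_bij:
  assumes P: "S_perm n P"
  shows "bij_betw (blk n) P ({..<n} \<times> {..<n})"
  unfolding bij_betw_def
proof
  show "inj_on (blk n) P"
    by (rule inj_onI) (rule block_uniq[OF P], auto simp: blk_def)
  show "blk n ` P = {..<n} \<times> {..<n}"
  proof (intro equalityI subsetI)
    fix x assume "x \<in> blk n ` P"
    then obtain i j where "(i,j) \<in> P" "x = (i div n, j div n)" by (auto simp: blk_def)
    then show "x \<in> {..<n} \<times> {..<n}" using Sperm_sub[OF P] sq_div by auto
  next
    fix x assume "x \<in> {..<n} \<times> {..<n}"
    then obtain a b where ab: "a < n" "b < n" "x = (a,b)" by auto
    have "\<exists>!p. p \<in> P \<and> fst p div n = a \<and> snd p div n = b" using SpD(4)[OF P, rule_format, OF ab(1,2)] .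
    then obtain p where "p \<in> P" "fst p div n = a" "snd p div n = b" by blast
    then show "x \<in> blk n ` P" using ab by (auto simp: blk_def)
  qed
qed

definition DD :: "nat \<Rightarrow> int" where
  "DD n = (\<Sum>A\<in>binmats n. (-1)^card A * int (W n A))"

lemma d_formula:
  assumes P: "S_perm n P"
  shows "int (card {Q. S_perm n Q \<and> P \<inter> Q = {}}) = DD n"
proof -
  have b: "bij_betw (blk n) P ({..<n} \<times> {..<n})" by (rule blk_bij[OF P])
  have "int (card {Q. S_perm n Q \<and> P \<inter> Q = {}}) =
    (\<Sum>T\<in>Pow P. (-1)^card T * int (card {Q. S_perm n Q \<and> T \<subseteq> Q}))" by (rule incl_excl[OF P])
  also have "\<dots> = (\<Sum>T\<in>Pow P. (-1)^card (blk n ` T) * int (W n (blk n ` T)))"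
  proof (rule sum.cong[OF refl])
    fix T assume T: "T \<in> Pow P"
    have "card (blk n ` T) = card T"
      using T b by (intro card_image) (auto simp: bij_betw_def intro: inj_on_subset)
    then show "(-1)^card T * int (card {Q. S_perm n Q \<and> T \<subseteq> Q}) = (-1)^card (blk n ` T) * int (W n (blk n ` T))"
      using cnt[OF P] T by simp
  qed
  also have "\<dots> = DD n"
    unfolding DD_def binmats_def
    by (rule sum.reindex_bij_betw[OF bij_betw_Pow[OF b], where g="\<lambda>A. (-1)^card A * int (W n A)"])
  finally show ?thesis .
qed

lemma card_Fam: "card (Fam n) = fact n ^ n"
  unfolding Fam_def by (simp add: card_PiE card_permutations)

lemma card_Sperm: "card {Q. S_perm n Q} = fact n ^ n * fact n ^ n"
  using bij_betw_same_card[OF Phi_bij[of n]] card_Fam by (simp add: card_cartesian_product)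

lemma Sperm_nonempty: "S_perm n P \<Longrightarrow> n > 0 \<Longrightarrow> P \<noteq> {}"
  using rowf_in[of n P 0] by auto

lemma eta_formula:
  assumes n: "n > 0"
  shows "int (2 * eta n) = int (card {Q. S_perm n Q}) * DD n"
proof -
  let ?S = "{Q. S_perm n Q}"
  let ?O = "Sigma ?S (\<lambda>P. {Q. S_perm n Q \<and> P \<inter> Q = {}})"
  have fS: "finite ?S" by (rule finite_Sperm)
  have fO: "finite ?O" using fS by (rule finite_SigmaI) (use finite_Sperm in auto)
  have "int (card ?O) = (\<Sum>P\<in>?S. int (card {Q. S_perm n Q \<and> P \<inter> Q = {}}))"
    using fS finite_Sperm by (simp add: card_SigmaI)
  also have "\<dots> = (\<Sum>P\<in>?S. DD n)" using d_formula by simp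
  also have "\<dots> = int (card ?S) * DD n" by simp
  finally have 1: "int (card ?O) = int (card ?S) * DD n" .
  let ?g = "\<lambda>x. {fst x, snd x}"
  have U: "{{P, Q} | P Q. S_perm n P \<and> S_perm n Q \<and> disjoint_mat P Q} = ?g ` ?O"
  proof (intro equalityI subsetI)
    fix u assume "u \<in> {{P, Q} | P Q. S_perm n P \<and> S_perm n Q \<and> disjoint_mat P Q}"
    then obtain P Q where "S_perm n P" "S_perm n Q" "P \<inter> Q = {}" "u = {P,Q}" by (auto simp: disjoint_mat_def)
    then show "u \<in> ?g ` ?O" by (intro image_eqI[where x="(P,Q)"]) auto
  next
    fix u assume "u \<in> ?g ` ?O"
    then obtain P Q where "S_perm n P" "S_perm n Q" "P \<inter> Q = {}" "u = {P,Q}" by auto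
    then show "u \<in> {{P, Q} | P Q. S_perm n P \<and> S_perm n Q \<and> disjoint_mat P Q}"
      unfolding disjoint_mat_def by blast
  qed
  have "card ?O = (\<Sum>u\<in>?g ` ?O. card {x \<in> ?O. ?g x = u})"
    using sum.image_gen[OF fO, of "\<lambda>_. (1::nat)" ?g] by simp
  also have "\<dots> = (\<Sum>u\<in>?g ` ?O. 2)"
  proof (rule sum.cong[OF refl])
    fix u assume "u \<in> ?g ` ?O"
    then obtain P Q where PQ: "S_perm n P" "S_perm n Q" "P \<inter> Q = {}" "u = {P,Q}" by auto
    have ne: "P \<noteq> Q" using PQ Sperm_nonempty[OF PQ(1) n] by auto
    have "{x \<in> ?O. ?g x = u} = {(P,Q),(Q,P)}"
      using PQ by (auto simp: doubleton_eq_iff)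
    then show "card {x \<in> ?O. ?g x = u} = 2" using ne by simp
  qed
  also have "\<dots> = 2 * eta n" unfolding eta_def U by simp
  finally show ?thesis using 1 by simp
qed


lemma prod_group_pow:
  fixes f :: "nat \<Rightarrow> 'b::comm_monoid_mult"
  assumes fS: "finite S" and fK: "finite K" and gK: "g ` S \<subseteq> K"
  shows "(\<Prod>x\<in>S. f (g x)) = (\<Prod>k\<in>K. f k ^ card {x \<in> S. g x = k})"
proof -
  have "(\<Prod>x\<in>S. f (g x)) = (\<Prod>k\<in>g ` S. \<Prod>x\<in>{x \<in> S. g x = k}. f (g x))"
    by (rule prod.image_gen[OF fS])
  also have "\<dots> = (\<Prod>k\<in>g ` S. f k ^ card {x \<in> S. g x = k})"
    by (rule prod.cong[OF refl]) simp
  also have "\<dots> = (\<Prod>k\<in>K. f k ^ card {x \<in> S. g x = k})"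
  proof (rule prod.mono_neutral_left[OF fK gK])
    show "\<forall>i\<in>K - g ` S. f i ^ card {x \<in> S. g x = i} = 1"
    proof
      fix i assume "i \<in> K - g ` S"
      then have "{x \<in> S. g x = i} = {}" by blast
      then show "f i ^ card {x \<in> S. g x = i} = 1" by (metis card.empty power_0)
    qed
  qed
  finally show ?thesis .
qed

lemma W_psi:
  assumes n: "n \<ge> 2" and A: "A \<in> binmats n"
  shows "int (W n A) = (\<Prod>i = 0..n-2. (int (fact (n - i))) ^ psi n i A)"
proof -
  let ?rc = "\<lambda>a. card {b. b < n \<and> (a,b) \<in> A}"
  let ?cc = "\<lambda>b. card {a. a < n \<and> (a,b) \<in> A}"
  have rcle: "?rc a \<le> n" for a by (rule order.trans[OF card_mono[of "{..<n}"]]) auto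
  have ccle: "?cc a \<le> n" for a by (rule order.trans[OF card_mono[of "{..<n}"]]) auto
  have sub1: "?rc ` {..<n} \<subseteq> {0..n}" using rcle by auto
  have sub2: "?cc ` {..<n} \<subseteq> {0..n}" using ccle by auto
  have 1: "(\<Prod>a<n. fact (n - ?rc a)) = (\<Prod>k\<in>{0..n}. fact (n - k) ^ r_k n k A)"
    unfolding r_k_def using prod_group_pow[OF finite_lessThan finite_atLeastAtMost sub1, of "\<lambda>k. fact (n - k)"]
    by (simp add: lessThan_def)
  have 2: "(\<Prod>b<n. fact (n - ?cc b)) = (\<Prod>k\<in>{0..n}. fact (n - k) ^ c_k n k A)"
    unfolding c_k_def using prod_group_pow[OF finite_lessThan finite_atLeastAtMost sub2, of "\<lambda>k. fact (n - k)"]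
    by (simp add: lessThan_def)
  have "W n A = (\<Prod>k\<in>{0..n}. fact (n - k) ^ psi n k A)"
    unfolding W_def 1 2 psi_def by (simp add: power_add prod.distrib)
  then have "int (W n A) = (\<Prod>k\<in>{0..n}. int (fact (n - k)) ^ psi n k A)"
    by (simp add: of_nat_prod)
  also have "\<dots> = (\<Prod>k\<in>{0..n-2}. int (fact (n - k)) ^ psi n k A)"
  proof (rule prod.mono_neutral_right)
    show "\<forall>i\<in>{0..n} - {0..n - 2}. int (fact (n - i)) ^ psi n i A = 1"
    proof
      fix i assume "i \<in> {0..n} - {0..n - 2}"
      then have "n - i = 0 \<or> n - i = 1" using n by auto
      then show "int (fact (n - i)) ^ psi n i A = 1" by auto
    qed
  qed auto
  finally show ?thesis .
qed


lemma prod_single: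
  assumes a: "a < n"
    and that: "\<And>x. x < n \<Longrightarrow> {y. y < n \<and> P x y} = (if x = a then {c} else {})"
  shows "(\<Prod>x<n. fact (n - card {y. y < n \<and> P x y})) = (fact (n-1) * fact n ^ (n-1) :: nat)"
proof -
  have "(\<Prod>x<n. fact (n - card {y. y < n \<and> P x y})) = (\<Prod>x<n. (fact (n - (if x = a then 1 else 0))::nat))"
    by (rule prod.cong[OF refl]) (simp add: that)
  also have "\<dots> = fact (n - 1) * (\<Prod>x\<in>{..<n} - {a}. (fact (n - (if x = a then 1 else 0))::nat))"
    using a by (subst prod.remove[of _ a]) auto
  also have "(\<Prod>x\<in>{..<n} - {a}. (fact (n - (if x = a then 1 else 0))::nat)) = (\<Prod>x\<in>{..<n} - {a}. fact n)"
    by (rule prod.cong) auto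
  also have "\<dots> = fact n ^ (n-1)" using a by simp
  finally show ?thesis .
qed

lemma W_empty: "W n {} = fact n ^ n * fact n ^ n"
  by (simp add: W_def)

lemma W_single:
  assumes a: "a < n" and b: "b < n"
  shows "W n {(a,b)} = (fact (n-1) * fact n ^ (n-1)) * (fact (n-1) * fact n ^ (n-1))"
proof -
  have 1: "(\<Prod>x<n. fact (n - card {y. y < n \<and> (x,y) \<in> {(a,b)}})) = (fact (n-1) * fact n ^ (n-1) :: nat)"
    by (rule prod_single[OF a, where c=b and P="\<lambda>x y. (x,y) \<in> {(a,b)}"]) (use b in auto)
  have 2: "(\<Prod>y<n. fact (n - card {x. x < n \<and> (x,y) \<in> {(a,b)}})) = (fact (n-1) * fact n ^ (n-1) :: nat)"
    by (rule prod_single[OF b, where c=a and P="\<lambda>y x. (x,y) \<in> {(a,b)}"]) (use a in auto)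
  show ?thesis unfolding W_def 1 2 ..
qed

lemma low_sum:
  assumes n: "n \<ge> 1"
  shows "(\<Sum>A\<in>{A \<in> binmats n. card A < 2}. (-1)^card A * int (W n A)) = 0"
proof -
  have fin: "finite A" if "A \<in> binmats n" for A
    using that by (auto simp: binmats_def intro: finite_subset)
  have eq: "{A \<in> binmats n. card A < 2} = insert {} ((\<lambda>p. {p}) ` ({..<n} \<times> {..<n}))"
  proof (intro equalityI subsetI)
    fix A assume A: "A \<in> {A \<in> binmats n. card A < 2}"
    then have "card A = 0 \<or> card A = 1" by auto
    moreover have "finite A" using A fin by auto
    ultimately have "A = {} \<or> (\<exists>p. A = {p})" by (auto simp: card_1_singleton_iff)
    then show "A \<in> insert {} ((\<lambda>p. {p}) ` ({..<n} \<times> {..<n}))" using A by (auto simp: binmats_def)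
  qed (auto simp: binmats_def)
  let ?c = "fact (n-1) * fact n ^ (n-1)"
  have "(\<Sum>A\<in>{A \<in> binmats n. card A < 2}. (-1)^card A * int (W n A))
      = int (W n {}) + (\<Sum>A\<in>(\<lambda>p. {p}) ` ({..<n} \<times> {..<n}). (-1)^card A * int (W n A))"
    unfolding eq by (subst sum.insert) auto
  also have "(\<Sum>A\<in>(\<lambda>p. {p}) ` ({..<n} \<times> {..<n}). (-1)^card A * int (W n A))
      = (\<Sum>p\<in>{..<n} \<times> {..<n}. (-1)^card {p} * int (W n {p}))"
    by (subst sum.reindex) (auto simp: inj_on_def)
  also have "\<dots> = (\<Sum>p\<in>{..<n} \<times> {..<n}. - int (?c * ?c))"
    by (rule sum.cong[OF refl]) (auto simp: W_single)
  also have "\<dots> = - int (n * n * (?c * ?c))" by simp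
  also have "n * n * (?c * ?c) = W n {}"
  proof -
    obtain m where m: "n = Suc m" using n by (cases n) auto
    have "n * n * (?c * ?c) = (n * fact m) * (n * fact m) * (fact n ^ m * fact n ^ m)"
      using m by (simp add: algebra_simps)
    also have "\<dots> = fact n ^ n * fact n ^ n" using m by (simp add: algebra_simps)
    finally show ?thesis by (simp add: W_empty)
  qed
  finally show ?thesis by simp
qed


definition rp :: "(nat \<Rightarrow> nat) \<Rightarrow> (nat \<times> nat) set \<Rightarrow> (nat \<times> nat) set" where
  "rp \<sigma> A = (\<lambda>(i,j). (\<sigma> i, j)) ` A"

lemma rp_mem: "\<sigma> permutes S \<Longrightarrow> (i,j) \<in> rp \<sigma> A \<longleftrightarrow> (inv \<sigma> i, j) \<in> A"
  unfolding rp_def by (auto simp: permutes_inverses image_iff intro!: bexI[where x="(inv \<sigma> i, j)"])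

lemma rp_binmats: "A \<in> binmats n \<Longrightarrow> \<sigma> permutes {..<n} \<Longrightarrow> rp \<sigma> A \<in> binmats n"
  unfolding binmats_def rp_def using perm_lt by fastforce

lemma rp_card: "\<sigma> permutes S \<Longrightarrow> card (rp \<sigma> A) = card A"
  unfolding rp_def by (rule card_image) (auto simp: inj_on_def dest: permutes_inj[THEN injD])

lemma perm_card_inv:
  assumes s: "\<sigma> permutes {..<n}"
  shows "card {i. i < n \<and> Q (inv \<sigma> i)} = card {i. i < (n::nat) \<and> Q i}"
proof -
  have "{i. i < n \<and> Q (inv \<sigma> i)} = \<sigma> ` {i. i < n \<and> Q i}"
  proof (intro equalityI subsetI)
    fix x assume x: "x \<in> {i. i < n \<and> Q (inv \<sigma> i)}"
    then have "inv \<sigma> x < n" using perm_inv_lt[OF s] by auto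
    then show "x \<in> \<sigma> ` {i. i < n \<and> Q i}" using x permutes_inverses[OF s]
      by (intro image_eqI[where x="inv \<sigma> x"]) auto
  next
    fix x assume "x \<in> \<sigma> ` {i. i < n \<and> Q i}"
    then obtain y where "y < n" "Q y" "x = \<sigma> y" by auto
    then show "x \<in> {i. i < n \<and> Q (inv \<sigma> i)}" using perm_lt[OF s] permutes_inverses[OF s] by auto
  qed
  then show ?thesis using permutes_inj[OF s] by (simp add: card_image inj_on_subset)
qed

lemma rp_psi:
  assumes s: "\<sigma> permutes {..<n}"
  shows "psi n k (rp \<sigma> A) = psi n k A"
proof -
  have "r_k n k (rp \<sigma> A) = r_k n k A"
    unfolding r_k_def rp_mem[OF s] using perm_card_inv[OF s, of "\<lambda>i. card {j. j < n \<and> (i, j) \<in> A} = k"] by simp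
  moreover have "c_k n k (rp \<sigma> A) = c_k n k A"
    unfolding c_k_def rp_mem[OF s] using perm_card_inv[OF s, of "\<lambda>i. (i, _) \<in> A"] by simp
  ultimately show ?thesis by (simp add: psi_def)
qed

lemma row_equiv_rp: "(A,B) \<in> row_equiv n \<longleftrightarrow> A \<in> binmats n \<and> (\<exists>\<sigma>. \<sigma> permutes {..<n} \<and> B = rp \<sigma> A)"
  unfolding row_equiv_def rp_def by simp

lemma equiv_row: "equiv (binmats n) (row_equiv n)"
proof (rule equivI)
  show "row_equiv n \<subseteq> binmats n \<times> binmats n"
    using rp_binmats by (auto simp: row_equiv_rp)
  show "refl_on (binmats n) (row_equiv n)"
    unfolding refl_on_def row_equiv_rp
  proof
    fix A assume "A \<in> binmats n"
    moreover have "A = rp id A" by (simp add: rp_def)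
    ultimately show "A \<in> binmats n \<and> (\<exists>\<sigma>. \<sigma> permutes {..<n} \<and> A = rp \<sigma> A)"
      using permutes_id by blast
  qed
  show "sym (row_equiv n)"
  proof (rule symI)
    fix A B assume "(A,B) \<in> row_equiv n"
    then obtain \<sigma> where A: "A \<in> binmats n" and s: "\<sigma> permutes {..<n}" and B: "B = rp \<sigma> A"
      by (auto simp: row_equiv_rp)
    have "A = rp (inv \<sigma>) B"
    proof (intro set_eqI)
      fix x :: "nat \<times> nat" obtain i j where x: "x = (i,j)" by force
      have "x \<in> rp (inv \<sigma>) B \<longleftrightarrow> (inv (inv \<sigma>) i, j) \<in> B" using rp_mem[OF permutes_inv[OF s]] x by simp
      also have "\<dots> \<longleftrightarrow> (\<sigma> i, j) \<in> B" using inv_inv_eq[OF permutes_bij[OF s]] by simp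
      also have "\<dots> \<longleftrightarrow> x \<in> A" using rp_mem[OF s] B x permutes_inverses[OF s] by simp
      finally show "x \<in> A \<longleftrightarrow> x \<in> rp (inv \<sigma>) B" by simp
    qed
    then show "(B,A) \<in> row_equiv n"
      using rp_binmats[OF A s] B permutes_inv[OF s] by (auto simp: row_equiv_rp)
  qed
  show "trans (row_equiv n)"
  proof (rule transI)
    fix A B C assume "(A,B) \<in> row_equiv n" "(B,C) \<in> row_equiv n"
    then obtain \<sigma> \<tau> where A: "A \<in> binmats n" and s: "\<sigma> permutes {..<n}" "\<tau> permutes {..<n}"
      and B: "B = rp \<sigma> A" and C: "C = rp \<tau> B"
      by (auto simp: row_equiv_rp)
    have "C = rp (\<tau> \<circ> \<sigma>) A" unfolding C B rp_def image_image by (rule image_cong) auto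
    then show "(A,C) \<in> row_equiv n" using A permutes_compose[OF s(1) s(2)] by (auto simp: row_equiv_rp)
  qed
qed

lemma class_const:
  assumes inv: "\<And>A \<sigma>. A \<in> binmats n \<Longrightarrow> \<sigma> permutes {..<n} \<Longrightarrow> f (rp \<sigma> A) = f A"
    and C: "C \<in> binclasses n"
  shows "rep C \<in> C" "\<And>A. A \<in> C \<Longrightarrow> f A = f (rep C)"
proof -
  obtain A0 where A0: "A0 \<in> binmats n" and C0: "C = row_equiv n `` {A0}"
    using C unfolding binclasses_def by (auto elim: quotientE)
  have "A0 \<in> C" using equiv_class_self[OF equiv_row A0] C0 by simp
  then show rC: "rep C \<in> C" unfolding rep_def by (rule someI)
  have fA: "f A = f A0" if xA: "A \<in> C" for A
  proof -
    obtain \<sigma> where "\<sigma> permutes {..<n}" "A = rp \<sigma> A0" using xA C0 by (auto simp: row_equiv_rp)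
    then show ?thesis using inv A0 by simp
  qed
  show "f A = f (rep C)" if "A \<in> C" for A using fA[OF that] fA[OF rC] by simp
qed


lemma finite_binmats: "finite (binmats n)"
  unfolding binmats_def by simp

lemma finite_binclasses: "finite (binclasses n)"
proof -
  have "binclasses n \<subseteq> Pow (binmats n)"
    unfolding binclasses_def using Union_quotient[OF equiv_row[of n]] by blast
  then show ?thesis using finite_binmats by (meson finite_Pow_iff finite_subset)
qed

lemma xi_DD:
  assumes n: "n \<ge> 2"
  shows "xi n = DD n"
proof -
  define g where "g A = (if 2 \<le> card A then (-1)^card A * (\<Prod>i = 0..n-2. (int (fact (n - i))) ^ psi n i A) else (0::int))" for A
  have ginv: "g (rp \<sigma> A) = g A" if "A \<in> binmats n" "\<sigma> permutes {..<n}" for A \<sigma>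
    unfolding g_def using rp_card[OF that(2)] rp_psi[OF that(2)] by simp
  have fC: "finite C" if "C \<in> binclasses n" for C
  proof -
    have "C \<subseteq> binmats n" using that Union_quotient[OF equiv_row[of n]] unfolding binclasses_def by blast
    then show ?thesis using finite_binmats finite_subset by blast
  qed
  have "xi n = (\<Sum>C\<in>binclasses n. if 2 \<le> eps (rep C) then (-1) ^ eps (rep C) * int (card C) *
      (\<Prod>i = 0..n-2. (int (fact (n - i))) ^ psi n i (rep C)) else 0)"
    unfolding xi_def by (rule sum.inter_filter[OF finite_binclasses])
  also have "\<dots> = (\<Sum>C\<in>binclasses n. int (card C) * g (rep C))"
    by (rule sum.cong[OF refl]) (simp add: g_def eps_def)
  also have "\<dots> = (\<Sum>C\<in>binclasses n. \<Sum>A\<in>C. g A)"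
  proof (rule sum.cong[OF refl])
    fix C assume C: "C \<in> binclasses n"
    have "(\<Sum>A\<in>C. g A) = (\<Sum>A\<in>C. g (rep C))"
      by (rule sum.cong[OF refl]) (rule class_const(2)[OF ginv C])
    then show "int (card C) * g (rep C) = (\<Sum>A\<in>C. g A)" by simp
  qed
  also have "\<dots> = (\<Sum>A\<in>\<Union>(binclasses n). g A)"
  proof -
    have "\<forall>A\<in>binclasses n. \<forall>B\<in>binclasses n. A \<noteq> B \<longrightarrow> A \<inter> B = {}"
      using quotient_disj[OF equiv_row[of n]] unfolding binclasses_def by blast
    then have "sum g (\<Union>(binclasses n)) = (sum \<circ> sum) g (binclasses n)"
      using fC by (intro sum.Union_disjoint) auto
    then show ?thesis by (simp add: comp_def)
  qed
  also have "\<Union>(binclasses n) = binmats n"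
    unfolding binclasses_def by (rule Union_quotient[OF equiv_row])
  also have "(\<Sum>A\<in>binmats n. g A) = (\<Sum>A\<in>binmats n. if 2 \<le> card A then (-1)^card A * int (W n A) else 0)"
    by (rule sum.cong[OF refl]) (simp add: g_def W_psi[OF n])
  finally have 1: "xi n = (\<Sum>A\<in>binmats n. if 2 \<le> card A then (-1)^card A * int (W n A) else 0)" .
  have "DD n = (\<Sum>A\<in>binmats n. (if 2 \<le> card A then (-1)^card A * int (W n A) else 0)
      + (if card A < 2 then (-1)^card A * int (W n A) else 0))"
    unfolding DD_def by (rule sum.cong[OF refl]) auto
  also have "\<dots> = xi n + (\<Sum>A\<in>binmats n. if card A < 2 then (-1)^card A * int (W n A) else 0)"
    unfolding 1 by (rule sum.distrib)
  also have "(\<Sum>A\<in>binmats n. if card A < 2 then (-1)^card A * int (W n A) else 0) = 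
      (\<Sum>A\<in>{A \<in> binmats n. card A < 2}. (-1)^card A * int (W n A))"
    by (rule sum.inter_filter[OF finite_binmats, symmetric])
  also have "\<dots> = 0" using low_sum n by simp
  finally show ?thesis by simp
qed

theorem mainTheorem6:
  fixes n :: nat
  assumes "n \<ge> 2"
  shows "real (eta n) = (real (fact n)) ^ (2 * n) / 2 * real_of_int (xi n)"
proof -
  have c: "fact n ^ n * fact n ^ n = (fact n ^ (2*n) :: nat)" by (simp add: mult_2 power_add)
  have e0: "int (2 * eta n) = int (card {Q. S_perm n Q}) * DD n"
    by (rule eta_formula) (use assms in simp)
  then have e1: "int (2 * eta n) = int (fact n ^ (2*n)) * xi n"
    unfolding card_Sperm c xi_DD[OF assms] .
  then have "real_of_int (int (2 * eta n)) = real_of_int (int (fact n ^ (2*n)) * xi n)"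
    by (rule arg_cong)
  then have h: "2 * real (eta n) = real (fact n) ^ (2*n) * real_of_int (xi n)" by simp
  have "real (eta n) = (2 * real (eta n)) / 2" by simp
  also have "\<dots> = real (fact n) ^ (2*n) * real_of_int (xi n) / 2" unfolding h ..
  also have "\<dots> = real (fact n) ^ (2*n) / 2 * real_of_int (xi n)" by simp
  finally show ?thesis .
qed

end
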